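(* If a natural number $n\ge2$ satisfies Robin's inequality $\sigma(n)<e^\gamma n\log(\log n)$, then $n$ satisfies the Kaneko–Lagarias inequality $\sigma(n)<\exp(H_n)\log(H_n)$ (and hence also the Lagarias inequality $\sigma(n)<H_n+\exp(H_n)\log(H_n)$).
   Context: $\sigma(n)=\sum_{d\mid n}d$ is the sum-of-divisors function, $H_n=1+\frac12+\cdots+\frac1n$ is the $n$-th harmonic number, and $\gamma$ is the Euler–Mascheroni constant. *)

theory Defs
  imports "HOL-Analysis.Analysis"
begin

definition divisor_sigma :: "nat \<Rightarrow> nat" where
  "divisor_sigma n = (\<Sum>d \<in> {d. d dvd n}. d)"

end

theory Submission
  imports Defs
begin

lemma harm_ge_gamma:
  assumes "m > 0"
  shows "euler_mascheroni \<le> harm m - ln (real m)"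
proof (rule LIMSEQ_le_const2[OF euler_mascheroni_LIMSEQ])
  show "\<exists>N. \<forall>n\<ge>N. harm n - ln (real n) \<le> harm m - ln (real m)"
    using euler_mascheroni_sequence_decreasing[OF assms] by blast
qed

theorem mainTheorem20:
  fixes n :: nat
  assumes "n \<ge> 2"
    and "real (divisor_sigma n) < exp euler_mascheroni * real n * ln (ln (real n))"
  shows "real (divisor_sigma n) < exp (harm n) * ln (harm n :: real)
         \<and> real (divisor_sigma n) < harm n + exp (harm n) * ln (harm n :: real)"
proof -
  have n0: "real n > 0" using assms(1) by simp
  have "0 \<le> real (divisor_sigma n)" by simp
  hence "0 < exp euler_mascheroni * real n * ln (ln (real n))" using assms(2) by linarith
  hence ll: "ln (ln (real n)) > 0" using n0
    by (metis exp_gt_zero mult_pos_pos zero_less_mult_pos)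
  have l0: "ln (real n) > 0" using assms(1) by simp
  have g: "euler_mascheroni + ln (real n) \<le> harm n" using harm_ge_gamma[of n] assms(1) by simp
  have gp: "(euler_mascheroni::real) \<ge> 0"
    using euler_mascheroni_pos by simp
  have hp: "harm n \<ge> ln (real n)" using g gp by linarith
  have e1: "exp euler_mascheroni * real n \<le> exp (harm n)"
  proof -
    have "exp euler_mascheroni * real n = exp (euler_mascheroni + ln (real n))"
      using n0 by (simp add: exp_add)
    also have "\<dots> \<le> exp (harm n)" using g by simp
    finally show ?thesis .
  qed
  have e2: "ln (ln (real n)) \<le> ln (harm n)" using hp l0 n0 by (subst ln_le_cancel_iff) auto
  have "exp euler_mascheroni * real n * ln (ln (real n)) \<le> exp (harm n) * ln (harm n)"
    using e1 e2 ll n0 by (intro mult_mono) auto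
  hence A: "real (divisor_sigma n) < exp (harm n) * ln (harm n :: real)" using assms(2) by linarith
  have "harm n \<ge> (0::real)" using hp l0 by linarith
  with A show ?thesis by linarith
qed

end
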